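(* Let $\alpha\in\mathbb{Q}(i)\setminus\mathbb{R}$ with $|\alpha|>1$, with minimal primitive polynomial $P_\alpha(X)=a_2X^2+a_1X+a_0$ ($a_0,a_1,a_2\in\mathbb{Z}$ coprime, $a_2>0$, $P_\alpha(\alpha)=0$), and $\mathcal{D}=\{0,\ldots,|a_0|-1\}$, $\Lambda_\alpha=\mathbb{Z}[\alpha]\cap\alpha^{-1}\mathbb{Z}[\alpha^{-1}]$. Let $r=(\tfrac{a_2}{a_0},\tfrac{a_1}{a_0})$ and $\tau_r:\mathbb{Z}^2\to\mathbb{Z}^2$, $(z_0,z_1)\mapsto\left(z_1,-\left\lfloor \tfrac{a_2}{a_0}z_0+\tfrac{a_1}{a_0}z_1\right\rfloor\right)$. Let $\mathcal{V}_0=\{\pm(1,0),\pm(0,1)\}$, $\mathcal{V}_{j+1}=\mathcal{V}_j\cup\tau_r(\mathcal{V}_j)\cup(-\tau_r(-\mathcal{V}_j))$ for $j\ge0$, and $\mathcal{V}_r=\bigcup_{j\ge0}\mathcal{V}_j$. Let $\iota_\alpha:\mathbb{Q}^2\to\mathbb{Q}(i)$, $(z_0,z_1)\mapsto \operatorname{sgn}(a_0)\big(z_0a_2+z_1(a_2\alpha+a_1)\big)$, and $\mathcal{V}_\alpha=\iota_\alpha(\mathcal{V}_r)$. Then $\alpha$ has the finiteness property in $\Lambda_\alpha$ if and only if every $N\in\mathcal{V}_\alpha$ has an integer $\alpha$-expansion.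
   Context: For $x\in\Lambda_\alpha$ there is a unique $d\in\mathcal{D}$ with $(x-d)/\alpha\in\Lambda_\alpha$, and $T_\alpha(x)=(x-d)/\alpha$. An element $N\in\Lambda_\alpha$ has an integer $\alpha$-expansion if the orbit $N, T_\alpha(N), T_\alpha^2(N),\ldots$ reaches $0$; $\alpha$ has the finiteness property in $\Lambda_\alpha$ if every $N\in\Lambda_\alpha$ has an integer $\alpha$-expansion. *)

theory Defs
  imports Complex_Main
begin

definition Zalpha :: "complex \<Rightarrow> complex set" where
  "Zalpha \<alpha> = {x. \<exists>(n::nat) (c::nat \<Rightarrow> int). x = (\<Sum>k\<le>n. of_int (c k) * \<alpha> ^ k)}"

definition invZalpha :: "complex \<Rightarrow> complex set" where
  "invZalpha \<alpha> = {x. \<exists>(n::nat) (c::nat \<Rightarrow> int). x = (\<Sum>k=1..n. of_int (c k) * inverse \<alpha> ^ k)}"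

definition Lambda :: "complex \<Rightarrow> complex set" where
  "Lambda \<alpha> = Zalpha \<alpha> \<inter> invZalpha \<alpha>"

definition digits :: "int \<Rightarrow> complex set" where
  "digits a0 = {of_int d | d. 0 \<le> d \<and> d < \<bar>a0\<bar>}"

definition T_alpha :: "complex \<Rightarrow> int \<Rightarrow> complex \<Rightarrow> complex" where
  "T_alpha \<alpha> a0 x = (x - (THE d. d \<in> digits a0 \<and> (x - d) / \<alpha> \<in> Lambda \<alpha>)) / \<alpha>"

definition has_int_expansion :: "complex \<Rightarrow> int \<Rightarrow> complex \<Rightarrow> bool" where
  "has_int_expansion \<alpha> a0 N \<longleftrightarrow> (\<exists>n. (T_alpha \<alpha> a0 ^^ n) N = 0)"

definition finiteness_property :: "complex \<Rightarrow> int \<Rightarrow> bool" where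
  "finiteness_property \<alpha> a0 \<longleftrightarrow> (\<forall>N \<in> Lambda \<alpha>. has_int_expansion \<alpha> a0 N)"

definition tau_r :: "int \<Rightarrow> int \<Rightarrow> int \<Rightarrow> int \<times> int \<Rightarrow> int \<times> int" where
  "tau_r a0 a1 a2 z = (snd z,
     - \<lfloor>(of_int a2 / of_int a0 :: rat) * of_int (fst z) + (of_int a1 / of_int a0) * of_int (snd z)\<rfloor>)"

definition negp :: "int \<times> int \<Rightarrow> int \<times> int" where
  "negp z = (- fst z, - snd z)"

fun Vj :: "int \<Rightarrow> int \<Rightarrow> int \<Rightarrow> nat \<Rightarrow> (int \<times> int) set" where
  "Vj a0 a1 a2 0 = {(1,0), (-1,0), (0,1), (0,-1)}"
| "Vj a0 a1 a2 (Suc j) = Vj a0 a1 a2 j \<union> tau_r a0 a1 a2 ` Vj a0 a1 a2 j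
     \<union> (\<lambda>z. negp (tau_r a0 a1 a2 (negp z))) ` Vj a0 a1 a2 j"

definition V_r :: "int \<Rightarrow> int \<Rightarrow> int \<Rightarrow> (int \<times> int) set" where
  "V_r a0 a1 a2 = (\<Union>j. Vj a0 a1 a2 j)"

definition iota :: "complex \<Rightarrow> int \<Rightarrow> int \<Rightarrow> int \<Rightarrow> int \<times> int \<Rightarrow> complex" where
  "iota \<alpha> a0 a1 a2 z = of_int (sgn a0) *
     (of_int (fst z) * of_int a2 + of_int (snd z) * (of_int a2 * \<alpha> + of_int a1))"

definition V_alpha :: "complex \<Rightarrow> int \<Rightarrow> int \<Rightarrow> int \<Rightarrow> complex set" where
  "V_alpha \<alpha> a0 a1 a2 = iota \<alpha> a0 a1 a2 ` V_r a0 a1 a2"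

end

theory Submission imports Defs "HOL-Computational_Algebra.Polynomial" begin

lemma map_poly_of_int_add: "map_poly (of_int :: int \<Rightarrow> 'a::ring_1) (p + q) = map_poly of_int p + map_poly of_int q"
  by (intro poly_eqI) (simp add: coeff_map_poly)

lemma map_poly_of_int_mult: "map_poly (of_int :: int \<Rightarrow> 'a::comm_ring_1) (p * q) = map_poly of_int p * map_poly of_int q"
proof (induction p)
  case 0 then show ?case by simp
next
  case (pCons a p)
  have "map_poly (of_int :: int \<Rightarrow> 'a) (pCons a p * q) = map_poly of_int (smult a q + pCons 0 (p * q))"
    by simp
  also have "\<dots> = smult (of_int a) (map_poly of_int q) + pCons 0 (map_poly of_int p * map_poly of_int q)"
    by (simp add: map_poly_of_int_add map_poly_smult map_poly_pCons pCons.IH)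
  also have "\<dots> = map_poly of_int (pCons a p) * map_poly (of_int :: int \<Rightarrow> 'a) q"
    by (simp add: map_poly_pCons)
  finally show ?case .
qed

lemma map_poly_of_int_smult: "map_poly (of_int :: int \<Rightarrow> 'a::comm_ring_1) (smult c p) = smult (of_int c) (map_poly of_int p)"
  by (simp add: map_poly_smult)



locale qsetting =
  fixes \<alpha> :: complex and a0 a1 a2 :: int
  assumes im: "Im \<alpha> \<noteq> 0" and a2pos: "a2 > 0" and cop: "gcd a0 (gcd a1 a2) = 1"
    and eq: "of_int a2 * \<alpha>\<^sup>2 + of_int a1 * \<alpha> + of_int a0 = 0"
begin

definition P :: "int poly" where "P = [:a0, a1, a2:]"

lemma content_P: "content P = 1"
  using cop a2pos by (simp add: P_def content_def gcd.commute gcd.left_commute)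

lemma poly_P: "poly (map_poly of_int P) \<alpha> = 0"
  using eq by (simp add: P_def map_poly_pCons power2_eq_square algebra_simps)

lemma lin_zero: fixes c0 c1 :: int assumes "of_int c0 + of_int c1 * \<alpha> = 0" shows "c0 = 0 \<and> c1 = 0"
proof -
  have "Im (of_int c0 + of_int c1 * \<alpha>) = 0" using assms by simp
  then have "of_int c1 * Im \<alpha> = 0" by simp
  then have "c1 = 0" using im by simp
  then show ?thesis using assms by simp
qed

lemma deg1_poly: fixes r :: "int poly" assumes "degree r \<le> 1"
  shows "r = [:coeff r 0, coeff r 1:]"
proof (rule poly_eqI)
  fix n show "coeff r n = coeff [:coeff r 0, coeff r 1:] n"
    using assms by (cases n; cases "n - 1") (auto simp: coeff_eq_0 coeff_pCons)
qed

lemma dvd_P: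
  fixes Q :: "int poly" assumes "poly (map_poly of_int Q) \<alpha> = 0"
  shows "P dvd Q"
proof -
  have P0: "P \<noteq> 0" using a2pos by (simp add: P_def)
  have dP: "degree P = 2" using a2pos by (simp add: P_def)
  define r where "r = pseudo_mod Q P"
  obtain a q where a: "a \<noteq> 0" and aq: "smult a Q = P * q + r"
    using pseudo_mod(1)[OF P0, of Q] r_def by blast
  have "degree r \<le> 1" using pseudo_mod(2)[OF P0, of Q] dP r_def by auto
  then have rr: "r = [:coeff r 0, coeff r 1:]" by (rule deg1_poly)
  have "poly (map_poly of_int (smult a Q)) \<alpha> = poly (map_poly of_int (P * q + r)) \<alpha>"
    using aq by simp
  then have "poly (map_poly (of_int :: int \<Rightarrow> complex) r) \<alpha> = 0"
    using assms poly_P by (simp add: map_poly_of_int_mult map_poly_of_int_add map_poly_of_int_smult)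
  then have "of_int (coeff r 0) + of_int (coeff r 1) * \<alpha> = 0"
    by (subst (asm) rr) (simp add: map_poly_pCons mult.commute)
  then have "r = 0" using lin_zero rr by (metis pCons_0_0)
  with aq have aq2: "smult a Q = P * q" by simp
  have "content (smult a Q) = content (P * q)" using aq2 by simp
  then have "normalize a * content Q = content q" by (simp add: content_mult content_P)
  then have "a dvd content q" by (metis dvd_triv_left normalize_dvd_iff)
  then have "[:a:] dvd q" by (simp add: const_poly_dvd_iff_dvd_content)
  then obtain q' where "q = [:a:] * q'" by (auto elim: dvdE)
  then have "smult a Q = smult a (P * q')" using aq2 by simp
  then have "Q = P * q'" using a by (metis smult_cancel)
  then show ?thesis by simp
qed

lemma core:
  fixes m :: int and U :: "int poly"
  assumes "of_int m = \<alpha> * poly (map_poly of_int U) \<alpha>"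
  shows "a0 dvd m"
proof -
  define Q where "Q = pCons 0 U - [:m:]"
  have "poly (map_poly of_int Q) \<alpha> = 0"
    using assms by (simp add: Q_def map_poly_of_int_add[symmetric, where 'a=complex] map_poly_pCons)
  then obtain S where "Q = P * S" using dvd_P by (auto elim: dvdE)
  then have "coeff Q 0 = a0 * coeff S 0" by (simp add: coeff_mult_0 P_def)
  then have "- m = a0 * coeff S 0" by (simp add: Q_def)
  then show ?thesis by (metis dvd_minus_iff dvd_triv_left)
qed


lemma map_poly_of_int_diff: "map_poly (of_int :: int \<Rightarrow> 'a::ring_1) (p - q) = map_poly of_int p - map_poly of_int q"
  by (intro poly_eqI) (simp add: coeff_map_poly)

lemma poly_sum_monoms: "poly (map_poly (of_int :: int \<Rightarrow> complex) (\<Sum>k\<le>n. monom (c k) k)) x = (\<Sum>k\<le>n. of_int (c k) * x ^ k)"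
  by (induction n) (simp_all add: map_poly_of_int_add map_poly_monom poly_monom)

lemma Zalpha_char: "x \<in> Zalpha \<alpha> \<longleftrightarrow> (\<exists>U. x = poly (map_poly of_int U) \<alpha>)"
proof
  assume "x \<in> Zalpha \<alpha>"
  then obtain n c where "x = (\<Sum>k\<le>n. of_int (c k) * \<alpha> ^ k)" by (auto simp: Zalpha_def)
  then show "\<exists>U. x = poly (map_poly of_int U) \<alpha>" by (metis poly_sum_monoms)
next
  assume "\<exists>U. x = poly (map_poly of_int U) \<alpha>"
  then obtain U where "x = poly (map_poly of_int U) \<alpha>" by blast
  also have "\<dots> = (\<Sum>k\<le>degree U. of_int (coeff U k) * \<alpha> ^ k)"
    by (subst poly_as_sum_of_monoms[symmetric, of U]) (rule poly_sum_monoms)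
  finally show "x \<in> Zalpha \<alpha>" by (auto simp: Zalpha_def)
qed

lemma Zalpha_mult: "x \<in> Zalpha \<alpha> \<Longrightarrow> \<alpha> * x \<in> Zalpha \<alpha>"
  unfolding Zalpha_char by (metis poly_pCons map_poly_pCons of_int_0 add_0)

lemma Zalpha_diff: "x \<in> Zalpha \<alpha> \<Longrightarrow> x - of_int k \<in> Zalpha \<alpha>"
  unfolding Zalpha_char
proof (elim exE)
  fix U assume "x = poly (map_poly of_int U) \<alpha>"
  then have "x - of_int k = poly (map_poly of_int (U - [:k:])) \<alpha>"
    by (simp add: map_poly_of_int_diff map_poly_pCons)
  then show "\<exists>U. x - of_int k = poly (map_poly of_int U) \<alpha>" by blast
qed

lemma anz: "\<alpha> \<noteq> 0" using im by auto

lemma eq2: "of_int a2 * \<alpha> * \<alpha> + of_int a1 * \<alpha> = - of_int a0"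
proof -
  have "of_int a2 * \<alpha> * \<alpha> + of_int a1 * \<alpha> = (of_int a2 * \<alpha>\<^sup>2 + of_int a1 * \<alpha> + of_int a0) - of_int a0"
    by (simp add: power2_eq_square)
  also have "\<dots> = - of_int a0" using eq by simp
  finally show ?thesis .
qed

lemma eq3: "of_int a0 * inverse \<alpha> = - (of_int a2 * \<alpha> + of_int a1)"
proof -
  have "of_int a0 = - (of_int a2 * \<alpha> + of_int a1) * \<alpha>" using eq2 by (simp add: eq_neg_iff_add_eq_0 algebra_simps)
  then show ?thesis using anz by (simp add: field_simps)
qed

lemma a0_pos: "a0 > 0"
proof -
  have r: "Re (of_int a2 * \<alpha>\<^sup>2 + of_int a1 * \<alpha> + of_int a0) = 0" using eq by simp
  have i: "Im (of_int a2 * \<alpha>\<^sup>2 + of_int a1 * \<alpha> + of_int a0) = 0" using eq by simp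
  from i have "Im \<alpha> * (2 * a2 * Re \<alpha> + a1) = 0" by (simp add: power2_eq_square algebra_simps)
  then have a1: "a1 = - 2 * a2 * Re \<alpha>" using im by simp
  from r a1 have "a0 = a2 * ((Re \<alpha>)\<^sup>2 + (Im \<alpha>)\<^sup>2)" by (simp add: power2_eq_square algebra_simps)
  moreover have "(Re \<alpha>)\<^sup>2 + (Im \<alpha>)\<^sup>2 > 0" using im by (simp add: sum_power2_gt_zero_iff)
  ultimately have "real_of_int a0 > 0" using a2pos by simp
  then show ?thesis by simp
qed

definition io :: "int \<times> int \<Rightarrow> complex" where
  "io z = of_int (fst z) * of_int a2 + of_int (snd z) * (of_int a2 * \<alpha> + of_int a1)"

lemma iota_eq: "iota \<alpha> a0 a1 a2 = io"
  using a0_pos by (auto simp: iota_def io_def fun_eq_iff)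

lemma io_zero: "io z = 0 \<longleftrightarrow> z = (0, 0)"
proof
  assume "io z = 0"
  then have "of_int (fst z * a2 + snd z * a1) + of_int (snd z * a2) * \<alpha> = 0"
    by (simp add: io_def algebra_simps)
  then have "fst z * a2 + snd z * a1 = 0 \<and> snd z * a2 = 0" by (rule lin_zero)
  then show "z = (0,0)" using a2pos by (cases z) auto
qed (simp add: io_def)

lemma alpha_io: "\<alpha> * io u = of_int (- (snd u) * a0) + of_int (fst u * a2) * \<alpha>"
proof -
  have "\<alpha> * io u = of_int (fst u) * of_int a2 * \<alpha> + of_int (snd u) * (of_int a2 * \<alpha> * \<alpha> + of_int a1 * \<alpha>)"
    by (simp add: io_def algebra_simps)
  also have "\<dots> = of_int (- (snd u) * a0) + of_int (fst u * a2) * \<alpha>" by (simp add: eq2)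
  finally show ?thesis .
qed

lemma io_Lambda: "io z \<in> Lambda \<alpha>"
proof -
  have "io z = poly (map_poly of_int [:fst z * a2 + snd z * a1, snd z * a2:]) \<alpha>"
    by (simp add: io_def map_poly_pCons algebra_simps)
  then have Z: "io z \<in> Zalpha \<alpha>" unfolding Zalpha_char by blast
  define c :: "nat \<Rightarrow> int" where "c = (\<lambda>k. if k = 1 then - a1 * fst z - a0 * snd z else - a0 * fst z)"
  have e1: "of_int a2 = - of_int a1 * inverse \<alpha> - of_int a0 * inverse \<alpha> ^ 2"
  proof -
    have "of_int a2 * \<alpha> * \<alpha> = - of_int a1 * \<alpha> - of_int a0" using eq2 by (simp add: eq_neg_iff_add_eq_0 algebra_simps)
    then show ?thesis using anz by (simp add: field_simps power2_eq_square)
  qed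
  have e2: "of_int a2 * \<alpha> + of_int a1 = - of_int a0 * inverse \<alpha>" using eq3 by simp
  have "io z = of_int (fst z) * of_int a2 + of_int (snd z) * (- of_int a0 * inverse \<alpha>)"
    by (simp add: io_def e2)
  also have "\<dots> = of_int (fst z) * (- of_int a1 * inverse \<alpha> - of_int a0 * inverse \<alpha> ^ 2) + of_int (snd z) * (- of_int a0 * inverse \<alpha>)"
    by (simp only: e1)
  also have "\<dots> = (\<Sum>k=1..2. of_int (c k) * inverse \<alpha> ^ k)"
    by (simp add: c_def numeral_2_eq_2 algebra_simps power2_eq_square)
  finally have "io z = (\<Sum>k=1..2. of_int (c k) * inverse \<alpha> ^ k)" .
  then have "io z \<in> invZalpha \<alpha>" unfolding invZalpha_def by blast
  with Z show ?thesis by (simp add: Lambda_def)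
qed

lemma Lambda_sub_aux:
  "\<And>x c. x \<in> Zalpha \<alpha> \<Longrightarrow> x = (\<Sum>k=1..n. of_int (c k) * inverse \<alpha> ^ k) \<Longrightarrow> \<exists>z. x = io z"
proof (induction n)
  case 0
  then show ?case using io_zero by auto
next
  case (Suc n)
  define \<beta> where "\<beta> = inverse \<alpha>"
  define y where "y = (\<Sum>k=1..n. of_int (c (Suc k)) * \<beta> ^ k)"
  have "x = of_int (c 1) * \<beta> + (\<Sum>k=Suc 1..Suc n. of_int (c k) * \<beta> ^ k)"
    using Suc.prems(2) by (simp add: \<beta>_def sum.atLeast_Suc_atMost)
  also have "(\<Sum>k=Suc 1..Suc n. of_int (c k) * \<beta> ^ k) = \<beta> * y"
    by (simp only: sum.shift_bounds_cl_Suc_ivl y_def sum_distrib_left) (simp add: algebra_simps)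
  finally have x: "x = \<beta> * (of_int (c 1) + y)" by (simp add: algebra_simps)
  have ab: "\<alpha> * \<beta> = 1" using anz by (simp add: \<beta>_def)
  have "\<alpha> * x = (\<alpha> * \<beta>) * (of_int (c 1) + y)" using x by (simp add: mult.assoc)
  then have "y = \<alpha> * x - of_int (c 1)" using ab by simp
  then have "y \<in> Zalpha \<alpha>" using Suc.prems(1) Zalpha_mult Zalpha_diff by simp
  then obtain w where w: "y = io w" using Suc.IH[of y "\<lambda>k. c (Suc k)"] y_def \<beta>_def by blast
  define m where "m = c 1 + a2 * fst w + a1 * snd w"
  have x2: "x = \<beta> * of_int m + of_int (a2 * snd w)"
    using x w ab by (simp add: m_def io_def algebra_simps)
  have "x - of_int (a2 * snd w) \<in> Zalpha \<alpha>" using Suc.prems(1) Zalpha_diff by blast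
  then obtain U where U: "x - of_int (a2 * snd w) = poly (map_poly of_int U) \<alpha>" by (auto simp: Zalpha_char)
  have "\<beta> * of_int m = poly (map_poly of_int U) \<alpha>" using U x2 by simp
  then have "(\<alpha> * \<beta>) * of_int m = \<alpha> * poly (map_poly of_int U) \<alpha>" by (simp add: mult.assoc)
  then have "of_int m = \<alpha> * poly (map_poly of_int U) \<alpha>" using ab by simp
  then have "a0 dvd m" by (rule core)
  then obtain t where t: "m = a0 * t" by (auto elim: dvdE)
  have "x = of_int t * (of_int a0 * \<beta>) + of_int (a2 * snd w)"
    using x2 t by (simp add: algebra_simps)
  also have "\<dots> = of_int t * (- (of_int a2 * \<alpha> + of_int a1)) + of_int (a2 * snd w)"
    by (simp only: \<beta>_def eq3)
  also have "\<dots> = io (snd w, - t)"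
    by (simp add: io_def algebra_simps)
  finally show ?case by blast
qed

lemma Lambda_sub: "x \<in> Lambda \<alpha> \<Longrightarrow> \<exists>z. x = io z"
  unfolding Lambda_def invZalpha_def using Lambda_sub_aux by blast


end


context qsetting begin
abbreviation tau where "tau \<equiv> tau_r a0 a1 a2"

lemma io_diff: "io u - io v = io (fst u - fst v, snd u - snd v)"
  by (simp add: io_def algebra_simps)

lemma tau_eq: "tau z = (snd z, - ((a2 * fst z + a1 * snd z) div a0))"
proof -
  have "(of_int a2 / of_int a0 :: rat) * of_int (fst z) + (of_int a1 / of_int a0) * of_int (snd z)
        = of_int (a2 * fst z + a1 * snd z) / of_int a0"
    by (simp add: add_divide_distrib)
  then show ?thesis unfolding tau_r_def by (simp only: floor_divide_of_int_eq)
qed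

lemma step_eq: "io z - of_int ((a2 * fst z + a1 * snd z) mod a0) = \<alpha> * io (tau z)"
proof -
  define s where "s = a2 * fst z + a1 * snd z"
  have sm: "of_int s = of_int a0 * of_int (s div a0) + (of_int (s mod a0) :: complex)"
    by (metis mult_div_mod_eq of_int_add of_int_mult)
  have "\<alpha> * io (tau z) = of_int (- (- (s div a0)) * a0) + of_int (snd z * a2) * \<alpha>"
    by (simp add: alpha_io tau_eq s_def)
  also have "\<dots> = io z - of_int (s mod a0)"
    using sm by (simp add: io_def s_def algebra_simps)
  finally show ?thesis by (simp add: s_def)
qed

lemma T_io: "T_alpha \<alpha> a0 (io z) = io (tau z)"
proof -
  define d0 where "d0 = (a2 * fst z + a1 * snd z) mod a0"
  have dig: "of_int d0 \<in> digits a0" using a0_pos by (auto simp: digits_def d0_def)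
  have "(io z - of_int d0) / \<alpha> = (\<alpha> * io (tau z)) / \<alpha>" using step_eq by (simp add: d0_def)
  also have "\<dots> = io (tau z)" using anz by simp
  finally have st: "(io z - of_int d0) / \<alpha> = io (tau z)" .
  have "(THE d. d \<in> digits a0 \<and> (io z - d) / \<alpha> \<in> Lambda \<alpha>) = of_int d0"
  proof (rule the_equality)
    show "of_int d0 \<in> digits a0 \<and> (io z - of_int d0) / \<alpha> \<in> Lambda \<alpha>" using dig st io_Lambda by simp
  next
    fix d assume d: "d \<in> digits a0 \<and> (io z - d) / \<alpha> \<in> Lambda \<alpha>"
    then obtain e where e: "d = of_int e" "0 \<le> e" "e < a0" using a0_pos by (auto simp: digits_def)
    obtain w where w: "(io z - d) / \<alpha> = io w" using d Lambda_sub by blast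
    have "io z - d = \<alpha> * io w" using w anz by (simp add: divide_eq_eq mult.commute)
    moreover have "io z - of_int d0 = \<alpha> * io (tau z)" using step_eq by (simp add: d0_def)
    ultimately have "\<alpha> * io w - \<alpha> * io (tau z) = (io z - d) - (io z - of_int d0)" by simp
    then have "of_int d0 - d = \<alpha> * (io w - io (tau z))" by (simp add: right_diff_distrib)
    also have "\<dots> = \<alpha> * io (fst w - fst (tau z), snd w - snd (tau z))" by (simp add: io_diff)
    finally have "of_int (d0 - e) = of_int (- (snd w - snd (tau z)) * a0) + of_int ((fst w - fst (tau z)) * a2) * \<alpha>"
      by (simp add: alpha_io e)
    then have "of_int (d0 - e - (- (snd w - snd (tau z)) * a0)) + of_int (- ((fst w - fst (tau z)) * a2)) * \<alpha> = 0"
      by (simp add: algebra_simps)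
    then have "d0 - e = - (snd w - snd (tau z)) * a0" using lin_zero by (metis eq_iff_diff_eq_0)
    then obtain k where k: "d0 - e = a0 * k" by (metis mult.commute mult_minus_left)
    moreover have "0 \<le> d0" "d0 < a0" using a0_pos by (auto simp: d0_def)
    ultimately have "d0 = e"
    proof -
      have "k = 0"
      proof (rule ccontr)
        assume "k \<noteq> 0"
        then have "k \<ge> 1 \<or> k \<le> -1" by linarith
        then show False
        proof
          assume "k \<ge> 1" then have "a0 * k \<ge> a0 * 1" using a0_pos by (intro mult_left_mono) auto
          then show False using k \<open>0 \<le> d0\<close> \<open>d0 < a0\<close> e by linarith
        next
          assume "k \<le> -1" then have "a0 * k \<le> a0 * (-1)" using a0_pos by (intro mult_left_mono) auto
          then show False using k \<open>0 \<le> d0\<close> \<open>d0 < a0\<close> e by linarith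
        qed
      qed
      then show ?thesis using k by simp
    qed
    then show "d = of_int d0" using e by simp
  qed
  then show ?thesis using st by (simp add: T_alpha_def)
qed

lemma T_iter: "(T_alpha \<alpha> a0 ^^ n) (io z) = io ((tau ^^ n) z)"
proof (induction n)
  case 0 show ?case by simp
next
  case (Suc n)
  have "(T_alpha \<alpha> a0 ^^ Suc n) (io z) = T_alpha \<alpha> a0 ((T_alpha \<alpha> a0 ^^ n) (io z))" by (rule funpow.simps(2)[THEN fun_cong, unfolded comp_def])
  also have "\<dots> = T_alpha \<alpha> a0 (io ((tau ^^ n) z))" by (simp only: Suc.IH)
  also have "\<dots> = io (tau ((tau ^^ n) z))" by (rule T_io)
  also have "\<dots> = io ((tau ^^ Suc n) z)" by simp
  finally show ?case .
qed

lemma expansion_iff: "has_int_expansion \<alpha> a0 (io z) \<longleftrightarrow> (\<exists>n. (tau ^^ n) z = (0,0))"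
  by (simp add: has_int_expansion_def T_iter io_zero)

end

lemma floor_diff_cases: fixes x y :: rat
  shows "\<lfloor>x + y\<rfloor> - \<lfloor>x\<rfloor> = \<lfloor>y\<rfloor> \<or> \<lfloor>x + y\<rfloor> - \<lfloor>x\<rfloor> = - \<lfloor>- y\<rfloor>"
proof (cases "frac x + frac y < 1")
  case True then show ?thesis by (simp add: floor_add)
next
  case False
  have "frac x < 1" by (rule frac_lt_1)
  then have "frac y > 0" using False by linarith
  then have "y \<notin> \<int>" using frac_eq_0_iff[of y] by auto
  then have "y \<noteq> of_int \<lfloor>y\<rfloor>" by (metis Ints_of_int)
  then have "\<lceil>y\<rceil> = \<lfloor>y\<rfloor> + 1" by (simp add: ceiling_altdef)
  then have f: "\<lfloor>- y\<rfloor> = - \<lfloor>y\<rfloor> - 1" by (simp add: floor_minus)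
  have "\<lfloor>x + y\<rfloor> = \<lfloor>x\<rfloor> + \<lfloor>y\<rfloor> + 1" using False by (simp only: floor_add if_False)
  then show ?thesis using f by linarith
qed

definition addp :: "int \<times> int \<Rightarrow> int \<times> int \<Rightarrow> int \<times> int" where
  "addp z v = (fst z + fst v, snd z + snd v)"

lemma tau_add:
  "tau_r a0 a1 a2 (addp z v) = addp (tau_r a0 a1 a2 z) (tau_r a0 a1 a2 v) \<or>
   tau_r a0 a1 a2 (addp z v) = addp (tau_r a0 a1 a2 z) (negp (tau_r a0 a1 a2 (negp v)))"
proof -
  define X :: rat where "X = of_int a2 / of_int a0 * of_int (fst z) + of_int a1 / of_int a0 * of_int (snd z)"
  define Y :: rat where "Y = of_int a2 / of_int a0 * of_int (fst v) + of_int a1 / of_int a0 * of_int (snd v)"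
  have XY: "(of_int a2 / of_int a0 :: rat) * of_int (fst (addp z v)) + of_int a1 / of_int a0 * of_int (snd (addp z v)) = X + Y"
    by (simp add: X_def Y_def addp_def distrib_left ac_simps)
  have nY: "(of_int a2 / of_int a0 :: rat) * of_int (fst (negp v)) + of_int a1 / of_int a0 * of_int (snd (negp v)) = - Y"
    by (simp add: Y_def negp_def)
  have t1: "tau_r a0 a1 a2 (addp z v) = (snd z + snd v, - \<lfloor>X + Y\<rfloor>)"
    unfolding tau_r_def XY by (simp add: addp_def)
  have t2: "tau_r a0 a1 a2 z = (snd z, - \<lfloor>X\<rfloor>)" by (simp add: tau_r_def X_def)
  have t3: "tau_r a0 a1 a2 v = (snd v, - \<lfloor>Y\<rfloor>)" by (simp add: tau_r_def Y_def)
  have t4: "negp (tau_r a0 a1 a2 (negp v)) = (snd v, \<lfloor>- Y\<rfloor>)"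
    unfolding tau_r_def nY by (simp add: negp_def)
  from floor_diff_cases[of X Y] show ?thesis
  proof
    assume "\<lfloor>X + Y\<rfloor> - \<lfloor>X\<rfloor> = \<lfloor>Y\<rfloor>"
    then have "- \<lfloor>X + Y\<rfloor> = - \<lfloor>X\<rfloor> + - \<lfloor>Y\<rfloor>" by linarith
    then have "tau_r a0 a1 a2 (addp z v) = addp (tau_r a0 a1 a2 z) (tau_r a0 a1 a2 v)"
      by (simp only: t1 t2 t3) (simp add: addp_def)
    then show ?thesis ..
  next
    assume "\<lfloor>X + Y\<rfloor> - \<lfloor>X\<rfloor> = - \<lfloor>- Y\<rfloor>"
    then have "- \<lfloor>X + Y\<rfloor> = - \<lfloor>X\<rfloor> + \<lfloor>- Y\<rfloor>" by linarith
    then have "tau_r a0 a1 a2 (addp z v) = addp (tau_r a0 a1 a2 z) (negp (tau_r a0 a1 a2 (negp v)))"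
      by (simp only: t1 t2 t4) (simp add: addp_def)
    then show ?thesis ..
  qed
qed

lemma V_tau: "v \<in> V_r a0 a1 a2 \<Longrightarrow> tau_r a0 a1 a2 v \<in> V_r a0 a1 a2"
proof -
  assume "v \<in> V_r a0 a1 a2"
  then obtain j where "v \<in> Vj a0 a1 a2 j" by (auto simp: V_r_def)
  then have "tau_r a0 a1 a2 v \<in> Vj a0 a1 a2 (Suc j)" unfolding Vj.simps(2) by (intro UnI1 UnI2 imageI)
  then show ?thesis unfolding V_r_def by blast
qed

lemma V_ntau: "v \<in> V_r a0 a1 a2 \<Longrightarrow> negp (tau_r a0 a1 a2 (negp v)) \<in> V_r a0 a1 a2"
proof -
  assume "v \<in> V_r a0 a1 a2"
  then obtain j where "v \<in> Vj a0 a1 a2 j" by (auto simp: V_r_def)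
  then have "negp (tau_r a0 a1 a2 (negp v)) \<in> Vj a0 a1 a2 (Suc j)" unfolding Vj.simps(2)
    by (rule UnI2[OF imageI[where f = "\<lambda>z. negp (tau_r a0 a1 a2 (negp z))"]])
  then show ?thesis unfolding V_r_def by blast
qed

lemma V_basis: "(1,0) \<in> V_r a0 a1 a2" "(-1,0) \<in> V_r a0 a1 a2" "(0,1) \<in> V_r a0 a1 a2" "(0,-1) \<in> V_r a0 a1 a2"
proof -
  have sub: "Vj a0 a1 a2 0 \<subseteq> V_r a0 a1 a2" unfolding V_r_def by blast
  have "(1,0) \<in> Vj a0 a1 a2 0" "(-1,0) \<in> Vj a0 a1 a2 0" "(0,1) \<in> Vj a0 a1 a2 0" "(0,-1) \<in> Vj a0 a1 a2 0"
    by (simp_all only: Vj.simps(1) insert_iff) simp_all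
  then show "(1,0) \<in> V_r a0 a1 a2" "(-1,0) \<in> V_r a0 a1 a2" "(0,1) \<in> V_r a0 a1 a2" "(0,-1) \<in> V_r a0 a1 a2"
    using sub by (auto simp only:)
qed

lemma diff_inV:
  assumes "v \<in> V_r a0 a1 a2"
  shows "\<exists>w \<in> V_r a0 a1 a2. (tau_r a0 a1 a2 ^^ n) (addp z v) = addp ((tau_r a0 a1 a2 ^^ n) z) w"
proof (induction n)
  case 0 then show ?case using assms by auto
next
  case (Suc n)
  then obtain w where w: "w \<in> V_r a0 a1 a2" "(tau_r a0 a1 a2 ^^ n) (addp z v) = addp ((tau_r a0 a1 a2 ^^ n) z) w" by blast
  have e: "(tau_r a0 a1 a2 ^^ Suc n) (addp z v) = tau_r a0 a1 a2 (addp ((tau_r a0 a1 a2 ^^ n) z) w)"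
    using w(2) by simp
  have e2: "(tau_r a0 a1 a2 ^^ Suc n) z = tau_r a0 a1 a2 ((tau_r a0 a1 a2 ^^ n) z)" by simp
  from tau_add[of a0 a1 a2 "(tau_r a0 a1 a2 ^^ n) z" w] show ?case
  proof
    assume "tau_r a0 a1 a2 (addp ((tau_r a0 a1 a2 ^^ n) z) w) = addp (tau_r a0 a1 a2 ((tau_r a0 a1 a2 ^^ n) z)) (tau_r a0 a1 a2 w)"
    then have "(tau_r a0 a1 a2 ^^ Suc n) (addp z v) = addp ((tau_r a0 a1 a2 ^^ Suc n) z) (tau_r a0 a1 a2 w)"
      by (simp only: e e2)
    then show ?case using V_tau[OF w(1)] by blast
  next
    assume "tau_r a0 a1 a2 (addp ((tau_r a0 a1 a2 ^^ n) z) w) = addp (tau_r a0 a1 a2 ((tau_r a0 a1 a2 ^^ n) z)) (negp (tau_r a0 a1 a2 (negp w)))"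
    then have "(tau_r a0 a1 a2 ^^ Suc n) (addp z v) = addp ((tau_r a0 a1 a2 ^^ Suc n) z) (negp (tau_r a0 a1 a2 (negp w)))"
      by (simp only: e e2)
    then show ?case using V_ntau[OF w(1)] by blast
  qed
qed

lemma reach_add:
  assumes "\<exists>n. (tau_r a0 a1 a2 ^^ n) z = (0,0)" and "v \<in> V_r a0 a1 a2"
    and H: "\<forall>u \<in> V_r a0 a1 a2. \<exists>n. (tau_r a0 a1 a2 ^^ n) u = (0,0)"
  shows "\<exists>n. (tau_r a0 a1 a2 ^^ n) (addp z v) = (0,0)"
proof -
  obtain m where m: "(tau_r a0 a1 a2 ^^ m) z = (0,0)" using assms(1) by blast
  obtain w where w: "w \<in> V_r a0 a1 a2" "(tau_r a0 a1 a2 ^^ m) (addp z v) = addp ((tau_r a0 a1 a2 ^^ m) z) w"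
    using diff_inV[OF assms(2)] by blast
  have wz: "(tau_r a0 a1 a2 ^^ m) (addp z v) = w" using w(2) m by (simp add: addp_def)
  obtain k where k: "(tau_r a0 a1 a2 ^^ k) w = (0,0)" using H w(1) by blast
  have "(tau_r a0 a1 a2 ^^ (k + m)) (addp z v) = (0,0)" by (simp add: funpow_add wz k)
  then show ?thesis by blast
qed

lemma all_reach:
  assumes H: "\<forall>u \<in> V_r a0 a1 a2. \<exists>n. (tau_r a0 a1 a2 ^^ n) u = (0,0)"
  shows "\<exists>n. (tau_r a0 a1 a2 ^^ n) z = (0,0)"
proof -
  let ?S = "\<lambda>z. \<exists>n. (tau_r a0 a1 a2 ^^ n) z = (0,0)"
  have S0: "?S (0,0)" by (rule exI[of _ 0]) simp
  have A: "?S (addp z v)" if "?S z" "v \<in> V_r a0 a1 a2" for z v using reach_add[OF that H] .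
  have x: "?S (a, 0)" for a :: int
  proof (induction a rule: int_induct[where k = 0])
    case base then show ?case using S0 by simp
  next
    case (step1 i) then show ?case using A[of "(i,0)" "(1,0)"] V_basis by (simp add: addp_def)
  next
    case (step2 i) then show ?case using A[of "(i,0)" "(-1,0)"] V_basis by (simp add: addp_def)
  qed
  have y: "?S (a, b)" for a b :: int
  proof (induction b rule: int_induct[where k = 0])
    case base then show ?case using x by simp
  next
    case (step1 i) then show ?case using A[of "(a,i)" "(0,1)"] V_basis by (simp add: addp_def)
  next
    case (step2 i) then show ?case using A[of "(a,i)" "(0,-1)"] V_basis by (simp add: addp_def)
  qed
  show ?thesis using y[of "fst z" "snd z"] by (metis prod.collapse)
qed

theorem mainTheorem5:
  fixes \<alpha> :: complex and a0 a1 a2 :: int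
  assumes "Re \<alpha> \<in> \<rat>" and "Im \<alpha> \<in> \<rat>" and "Im \<alpha> \<noteq> 0"
    and "cmod \<alpha> > 1"
    and "a2 > 0" and "gcd a0 (gcd a1 a2) = 1"
    and "of_int a2 * \<alpha>\<^sup>2 + of_int a1 * \<alpha> + of_int a0 = 0"
  shows "finiteness_property \<alpha> a0 \<longleftrightarrow>
         (\<forall>N \<in> V_alpha \<alpha> a0 a1 a2. has_int_expansion \<alpha> a0 N)"
proof -
  interpret q: qsetting \<alpha> a0 a1 a2 using assms by unfold_locales auto
  show ?thesis
  proof
    assume "finiteness_property \<alpha> a0"
    then show "\<forall>N \<in> V_alpha \<alpha> a0 a1 a2. has_int_expansion \<alpha> a0 N"
      unfolding finiteness_property_def V_alpha_def q.iota_eq using q.io_Lambda by blast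
  next
    assume R: "\<forall>N \<in> V_alpha \<alpha> a0 a1 a2. has_int_expansion \<alpha> a0 N"
    have H: "\<forall>u \<in> V_r a0 a1 a2. \<exists>n. (tau_r a0 a1 a2 ^^ n) u = (0,0)"
    proof
      fix u assume "u \<in> V_r a0 a1 a2"
      then have "has_int_expansion \<alpha> a0 (q.io u)" using R unfolding V_alpha_def q.iota_eq by blast
      then show "\<exists>n. (tau_r a0 a1 a2 ^^ n) u = (0,0)" using q.expansion_iff by blast
    qed
    show "finiteness_property \<alpha> a0"
      unfolding finiteness_property_def
    proof
      fix N assume "N \<in> Lambda \<alpha>"
      then obtain z where "N = q.io z" using q.Lambda_sub by blast
      then show "has_int_expansion \<alpha> a0 N" using all_reach[OF H] q.expansion_iff by simp
    qed
  qed
qed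

end
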